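(* Let $4/3\le p\le\sqrt2$, and put $$u=\frac{6p^2}{4-p^2},\quad v=2,\quad a=\frac{3p^3}{4-p^2},\quad b=\frac{5p}{2},\quad c=\frac p2.$$ Define $F(z)=|u+vz|-|a+bz-cz^2|$. Then $F(z)\le F(-|z|)$ for all $z$ with $|z|\le1$. *)

theory Defs
  imports Complex_Main
begin

definition F8 :: "real \<Rightarrow> complex \<Rightarrow> real" where
  "F8 p z = (let u = 6 * p^2 / (4 - p^2); v = 2; a = 3 * p^3 / (4 - p^2);
                 b = 5 * p / 2; c = p / 2
             in cmod (complex_of_real u + complex_of_real v * z)
                - cmod (complex_of_real a + complex_of_real b * z - complex_of_real c * z^2))"

end

theory Submission
  imports Defs
begin

lemma Q2: fixes m r :: real
  assumes "12/5 \<le> m" "m \<le> 3" "0 \<le> r" "r \<le> 1"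
  shows "(20*m - 10*r^2 + 16*m*r)*(2*m-2*r) \<ge> 24*m^2"
proof -
  define P where "P = 8*m*m + 16*m*m*r - 20*m*r - 26*m*r*r + 10*r*r*r"
  have e: "(20*m - 10*r^2 + 16*m*r)*(2*m-2*r) - 24*m^2 = 2*P"
    unfolding P_def by (simp add: algebra_simps power2_eq_square)
  have h1: "m*r*r \<le> m*r" using assms by (simp add: mult_left_le)
  have h2: "r*r*r \<ge> 0" using assms by simp
  have h3': "(12/5)*(m*r) \<le> m*(m*r)" using assms by (intro mult_right_mono) auto
  have h3: "m*m*r \<ge> (12/5)*m*r" using h3' by (simp add: mult.assoc)
  have h4: "m*r \<le> m" using assms by (simp add: mult_left_le)
  have h5: "m*m \<ge> (12/5)*m" using assms by (simp add: mult_right_mono)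
  have "P \<ge> 0" unfolding P_def
    using h1 h2 h3 h4 h5 assms by linarith
  then show ?thesis using e by linarith
qed

lemma Q1: fixes m r :: real
  assumes "12/5 \<le> m" "m \<le> 3" "0 \<le> r" "r \<le> 1"
  shows "(20*m - 10*r^2 + 16*m*r)*(2*m-2*r) \<ge> 12*m*(r^2+5*r)"
proof -
  define P where "P = 20*m*m + 16*m*m*r - 50*m*r - 32*m*r*r + 10*r*r*r"
  have e: "(20*m - 10*r^2 + 16*m*r)*(2*m-2*r) - 12*m*(r^2+5*r) = 2*P"
    unfolding P_def by (simp add: algebra_simps power2_eq_square)
  have h1: "m*r*r \<le> m*r" using assms by (simp add: mult_left_le)
  have h2: "r*r*r \<ge> 0" using assms by simp
  have h3': "(12/5)*(m*r) \<le> m*(m*r)" using assms by (intro mult_right_mono) auto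
  have h3: "m*m*r \<ge> (12/5)*m*r" using h3' by (simp add: mult.assoc)
  have h4: "m*r \<le> m" using assms by (simp add: mult_left_le)
  have h5: "m*m \<ge> (12/5)*m" using assms by (simp add: mult_right_mono)
  have "P \<ge> 0" unfolding P_def
    using h1 h2 h3 h4 h5 assms by linarith
  then show ?thesis using e by linarith
qed

lemma fbound: fixes m r y :: real
  assumes "12/5 \<le> m" "m \<le> 3" "0 \<le> r" "r \<le> 1" "0 \<le> y" "y \<le> 2*r"
  shows "(20*m - 10*r^2 + 16*m*r - 8*m*y)*(2*m-2*r+y) \<ge> 12*m*(r^2+5*r)
       \<and> (20*m - 10*r^2 + 16*m*r - 8*m*y)*(2*m-2*r+y) \<ge> 24*m^2"
proof -
  define f where "f y = (20*m - 10*r^2 + 16*m*r - 8*m*y)*(2*m-2*r+y)" for y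
  have id: "2*r * f y = (2*r - y) * f 0 + y * f (2*r) + 16*m*r*y*(2*r-y)"
    unfolding f_def by (simp add: algebra_simps power2_eq_square)
  have f2: "f (2*r) = (20*m-10*r^2)*(2*m)" unfolding f_def by (simp add: algebra_simps)
  have r2: "r^2 \<le> 1" using assms by (simp add: power_le_one)
  have r2': "r^2 \<le> r" using assms by (simp add: power2_eq_square mult_left_le)
  have A1: "f 0 \<ge> 12*m*(r^2+5*r)" using Q1[OF assms(1-4)] unfolding f_def by simp
  have A2: "f 0 \<ge> 24*m^2" using Q2[OF assms(1-4)] unfolding f_def by simp
  have B1: "f (2*r) \<ge> 12*m*(r^2+5*r)"
  proof -
    have "12*m*(r^2+5*r) \<le> 12*m*6" using assms r2 by (intro mult_left_mono) auto
    also have "... = (2*m)*36" by simp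
    also have "... \<le> (2*m)*(20*m-10*r^2)" using assms r2 by (intro mult_left_mono) auto
    also have "... = (20*m-10*r^2)*(2*m)" by simp
    finally show ?thesis using f2 by simp
  qed
  have B2: "f (2*r) \<ge> 24*m^2"
  proof -
    have "24*m^2 = 12*m*(2*m)" by (simp add: power2_eq_square)
    also have "... \<le> (20*m-10*r^2)*(2*m)" using assms r2 by (intro mult_right_mono) auto
    finally show ?thesis using f2 by simp
  qed
  have gen: "f y \<ge> K" if "f 0 \<ge> K" "f (2*r) \<ge> K" for K
  proof (cases "r = 0")
    case True then have "y = 0" using assms by simp
    then show ?thesis using that by simp
  next
    case False
    then have rp: "r > 0" using assms by simp
    have "(2*r - y) * f 0 \<ge> (2*r - y) * K" using that assms by (intro mult_left_mono) auto
    moreover have "y * f (2*r) \<ge> y * K" using that assms by (intro mult_left_mono) auto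
    moreover have "16*m*r*y*(2*r-y) \<ge> 0" using assms by simp
    ultimately have "2*r * f y \<ge> 2*r*K" using id by (simp add: algebra_simps)
    then show ?thesis using rp by simp
  qed
  show ?thesis using gen[OF A1 B1] gen[OF A2 B2] unfolding f_def by simp
qed

lemma F8_alt:
  assumes "p^2 < 4" "0 \<le> p"
  shows "F8 p z = 2 * cmod (z + complex_of_real (3*p^2/(4-p^2)))
     - (p/2) * cmod (z^2 - 5*z - complex_of_real (2*(3*p^2/(4-p^2))))"
proof -
  define m where "m = 3*p^2/(4-p^2)"
  have D: "4 - p^2 \<noteq> 0" using assms by simp
  have u: "6 * p^2 / (4 - p^2) = 2*m" unfolding m_def by simp
  have a: "3 * p^3 / (4 - p^2) = (p/2)*(2*m)" unfolding m_def using D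
    by (simp add: field_simps power3_eq_cube power2_eq_square)
  have e1: "complex_of_real (6 * p^2 / (4 - p^2)) + complex_of_real 2 * z = 2 * (z + complex_of_real m)"
    unfolding u by simp
  have e2: "complex_of_real (3 * p^3 / (4 - p^2)) + complex_of_real (5*p/2) * z - complex_of_real (p/2) * z^2
      = - (complex_of_real (p/2) * (z^2 - 5*z - complex_of_real (2*m)))"
    unfolding a by (simp add: algebra_simps)
  have n1: "cmod (2 * (z + complex_of_real m)) = 2 * cmod (z + complex_of_real m)"
    by (subst norm_mult) simp
  have n2: "cmod (- (complex_of_real (p/2) * (z^2 - 5*z - complex_of_real (2*m))))
      = \<bar>p/2\<bar> * cmod (z^2 - 5*z - complex_of_real (2*m))"
    by (simp only: norm_minus_cancel norm_mult norm_of_real)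
  show ?thesis
    unfolding F8_def Let_def e1 e2 n1 n2 m_def[symmetric] using assms(2) by simp
qed

theorem lemma8:
  fixes p :: real and z :: complex
  assumes "4/3 \<le> p" and "p \<le> sqrt 2" and "cmod z \<le> 1"
  shows "F8 p z \<le> F8 p (- complex_of_real (cmod z))"
proof -
  define r where "r = cmod z"
  define x where "x = Re z"
  define w where "w = Im z"
  have rr: "r^2 = x^2 + w^2" unfolding r_def x_def w_def by (simp add: cmod_power2)
  have xr: "\<bar>x\<bar> \<le> r" unfolding r_def x_def by (rule abs_Re_le_cmod)
  have r0: "0 \<le> r" "r \<le> 1" using assms(3) unfolding r_def by auto
  have p0: "0 \<le> p" using assms(1) by simp
  have p2: "p^2 \<le> 2"
  proof -
    have "p^2 \<le> (sqrt 2)^2" using power_mono[OF assms(2) p0] .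
    then show ?thesis by simp
  qed
  have p2': "16/9 \<le> p^2"
  proof -
    have "(4/3)^2 \<le> p^2" using assms(1) by (intro power_mono) auto
    then show ?thesis by (simp add: power2_eq_square)
  qed
  define m where "m = 3*p^2/(4-p^2)"
  define k where "k = p/2"
  have D: "4 - p^2 > 0" using p2 by simp
  have m1: "12/5 \<le> m" unfolding m_def using D p2' by (simp add: pos_le_divide_eq)
  have m2: "m \<le> 3" unfolding m_def using D p2 by (simp add: pos_divide_le_eq)
  have k1: "2/3 \<le> k" unfolding k_def using assms(1) by simp
  have F1: "F8 p z = 2 * cmod (z + complex_of_real m) - k * cmod (z^2 - 5*z - complex_of_real (2*m))"
    using F8_alt[of p z] D p0 unfolding m_def k_def by simp
  have F2: "F8 p (- complex_of_real r) = 2 * (m - r) - k * \<bar>r^2 + 5*r - 2*m\<bar>"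
  proof -
    have "- complex_of_real r + complex_of_real m = complex_of_real (m - r)" by simp
    moreover have "(- complex_of_real r)^2 - 5*(- complex_of_real r) - complex_of_real (2*m)
        = complex_of_real (r^2 + 5*r - 2*m)" by simp
    ultimately show ?thesis
      using F8_alt[of p "- complex_of_real r"] D p0 m1 r0 unfolding m_def[symmetric] k_def
      by (simp only: norm_of_real)
  qed
  define S where "S = cmod (z + complex_of_real m)"
  define T where "T = cmod (z^2 - 5*z - complex_of_real (2*m))"
  define S0 where "S0 = m - r"
  define T0 where "T0 = \<bar>r^2 + 5*r - 2*m\<bar>"
  define y where "y = x + r"
  define N where "N = 20*m - 10*r^2 + 16*m*r - 8*m*y"
  have S2: "S^2 = (x+m)^2 + w^2" unfolding S_def x_def w_def by (simp add: cmod_power2)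
  have T2: "T^2 = (x^2 - w^2 - 5*x - 2*m)^2 + (2*x*w - 5*w)^2"
    unfolding T_def x_def w_def cmod_power2 by (simp add: power2_eq_square algebra_simps)
  have Sge: "m + x \<le> S"
  proof -
    have "\<bar>Re (z + complex_of_real m)\<bar> \<le> S" unfolding S_def by (rule abs_Re_le_cmod)
    then show ?thesis unfolding x_def by simp
  qed
  have Tle: "T \<le> r^2 + 5*r + 2*m"
  proof -
    have "T \<le> cmod (z^2 - 5*z) + cmod (complex_of_real (2*m))"
      unfolding T_def by (rule norm_triangle_ineq4)
    also have "cmod (z^2 - 5*z) \<le> cmod (z^2) + cmod (5*z)" by (rule norm_triangle_ineq4)
    finally show ?thesis using m1 unfolding r_def by (simp add: norm_mult norm_power)
  qed
  have y0: "0 \<le> y" "y \<le> 2*r" unfolding y_def using xr by auto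
  have SS: "(S - S0)*(S + S0) = 2*m*y"
  proof -
    have "(S - S0)*(S + S0) = S^2 - S0^2" by (simp add: power2_eq_square algebra_simps)
    also have "... = 2*m*y" unfolding S2 S0_def y_def using rr
      by (simp add: power2_eq_square algebra_simps)
    finally show ?thesis .
  qed
  have TT: "(T - T0)*(T + T0) = y*N"
  proof -
    have w2: "w^2 = r^2 - x^2" using rr by simp
    have "(T - T0)*(T + T0) = T^2 - T0^2" by (simp add: power2_eq_square algebra_simps)
    also have "T^2 = (x^2 - w^2 - 5*x - 2*m)^2 + w^2*(2*x - 5)^2" unfolding T2
      by (simp add: power2_eq_square algebra_simps)
    also have "T0^2 = (r^2 + 5*r - 2*m)^2" unfolding T0_def by simp
    also have "(x^2 - w^2 - 5*x - 2*m)^2 + w^2*(2*x - 5)^2 - (r^2 + 5*r - 2*m)^2 = y*N"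
      unfolding w2 y_def N_def by (simp add: power2_eq_square algebra_simps)
    finally show ?thesis .
  qed
  have S00: "S0 > 0" unfolding S0_def using m1 r0 by simp
  have S0': "0 \<le> S" unfolding S_def by simp
  have T0': "0 \<le> T" "0 \<le> T0" unfolding T_def T0_def by simp_all
  have Npos: "N > 0"
  proof -
    have "r^2 \<le> 1" using r0 by (simp add: power_le_one)
    moreover have "0 \<le> m*(2*r - y)" using y0 m1 by simp
    moreover have "N = 20*m - 10*r^2 + 8*(m*(2*r - y))" unfolding N_def by (simp add: algebra_simps)
    ultimately show ?thesis using m1 by linarith
  qed
  have fb: "N*(2*m-2*r+y) \<ge> 12*m*(r^2+5*r) \<and> N*(2*m-2*r+y) \<ge> 24*m^2"
    unfolding N_def using fbound[OF m1 m2 r0 y0] .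
  have key: "4*m*(T + T0) \<le> k*N*(S + S0)"
  proof -
    define f where "f = N*(2*m-2*r+y)"
    have f0: "0 \<le> f" using fb m1 unfolding f_def by (smt (verit) zero_le_power2)
    have "4*m*(T + T0) \<le> (2/3)*f"
    proof (cases "r^2 + 5*r \<ge> 2*m")
      case True
      then have "T + T0 \<le> 2*(r^2+5*r)" using Tle unfolding T0_def by simp
      then have "4*m*(T + T0) \<le> 4*m*(2*(r^2+5*r))" using m1 by (intro mult_left_mono) auto
      also have "4*m*(2*(r^2+5*r)) = (2/3)*(12*m*(r^2+5*r))" by (simp add: algebra_simps)
      also have "... \<le> (2/3)*f" using fb unfolding f_def by (intro mult_left_mono) auto
      finally show ?thesis .
    next
      case False
      then have "T + T0 \<le> 4*m" using Tle unfolding T0_def by simp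
      then have "4*m*(T + T0) \<le> 4*m*(4*m)" using m1 by (intro mult_left_mono) auto
      also have "4*m*(4*m) = (2/3)*(24*m^2)" by (simp add: algebra_simps power2_eq_square)
      also have "... \<le> (2/3)*f" using fb unfolding f_def by (intro mult_left_mono) auto
      finally show ?thesis .
    qed
    also have "... \<le> k*f" using k1 f0 by (intro mult_right_mono) auto
    also have "k*f \<le> k*(N*(S+S0))" unfolding f_def using k1 Npos Sge y0
      by (intro mult_left_mono) (auto simp: S0_def y_def)
    finally show ?thesis by (simp add: mult.assoc)
  qed
  have main: "2*(S - S0) \<le> k*(T - T0)"
  proof (cases "T + T0 = 0")
    case True
    then have "y*N = 0" using TT by simp
    then have "y = 0" using Npos by simp
    then have "(S - S0)*(S + S0) = 0" using SS by simp
    then have "S = S0" using S00 S0' by (simp add: add_pos_nonneg)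
    moreover have "T = 0" "T0 = 0" using True T0' by auto
    ultimately show ?thesis by simp
  next
    case False
    then have TP: "T + T0 > 0" using T0' by simp
    have SP: "S + S0 > 0" using S00 S0' by simp
    have "((S+S0)*(T+T0))*(2*(S - S0)) = 2*((S - S0)*(S+S0))*(T+T0)" by (simp add: algebra_simps)
    also have "... = y*(4*m*(T+T0))" unfolding SS by (simp add: algebra_simps)
    also have "... \<le> y*(k*N*(S+S0))" using key y0 by (intro mult_left_mono) auto
    also have "... = k*((T - T0)*(T+T0))*(S+S0)" unfolding TT by (simp add: algebra_simps)
    also have "... = ((S+S0)*(T+T0))*(k*(T - T0))" by (simp add: algebra_simps)
    finally show ?thesis using SP TP by (simp add: mult_le_cancel_left_pos)
  qed
  show ?thesis
    unfolding F1 r_def[symmetric] F2 using main unfolding S_def T_def S0_def T0_def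
    by (simp add: algebra_simps)
qed
end
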